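(* Let $G=PSL_2(\mathbb R)\times PSL_2(\mathbb R)$ and $H=\{(x,x):x\in PSL_2(\mathbb R)\}$. For every $\lambda\in\mathbb R\setminus\{0,1\}$ the set $\{(\exp X,\exp(\lambda X)):X\in sl_2(\mathbb R)\}\subseteq G$ (the exponential image of $\mathbf m_\lambda=\{(X,\lambda X):X\in sl_2(\mathbb R)\}$) is not the image $\sigma(G/H)$ of a global sharply transitive section $\sigma:G/H\to G$.
   Context: A section $\sigma:G/H\to G$ with $\sigma(H)=1$ is sharply transitive if $\sigma(G/H)$ is a set of representatives of the left cosets of $H$ and for any cosets $aH,bH$ there is exactly one $z\in\sigma(G/H)$ with $zaH=bH$. Here $\exp$ denotes the exponential map $sl_2(\mathbb R)\to SL_2(\mathbb R)$ followed by the projection to $PSL_2(\mathbb R)$. The subspaces $\mathbf m_\lambda$, $\lambda\in\mathbb R\setminus\{0,1\}$, are complements to the diagonal Lie algebra $\mathbf h=\{(X,X)\}$ in $sl_2(\mathbb R)\oplus sl_2(\mathbb R)$ satisfying $[\mathbf h,\mathbf m_\lambda]\subseteq\mathbf m_\lambda$. *)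

theory Defs
  imports "HOL-Analysis.Analysis" "HOL-Algebra.Left_Coset"
begin

type_synonym mat2 = "real^2^2"

primrec mpow :: "mat2 \<Rightarrow> nat \<Rightarrow> mat2" where
  "mpow X 0 = mat 1"
| "mpow X (Suc n) = X ** mpow X n"

definition mexp :: "mat2 \<Rightarrow> mat2" where
  "mexp X = (\<Sum>n. (1 / fact n) *\<^sub>R mpow X n)"

definition SL2 :: "mat2 set" where
  "SL2 = {A. det A = 1}"

definition sl2 :: "mat2 set" where
  "sl2 = {X. trace X = 0}"

text \<open>Elements of PSL_2(R) = SL_2(R)/{+-1} are represented as the classes {A, -A}.\<close>
definition psl_class :: "mat2 \<Rightarrow> mat2 set" where
  "psl_class A = {A, - A}"

definition PSL2 :: "mat2 set monoid" where
  "PSL2 = \<lparr>carrier = psl_class ` SL2,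
           mult = (\<lambda>P Q. {A ** B | A B. A \<in> P \<and> B \<in> Q}),
           one = psl_class (mat 1)\<rparr>"

definition pexp :: "mat2 \<Rightarrow> mat2 set" where
  "pexp X = psl_class (mexp X)"

definition GG :: "(mat2 set \<times> mat2 set) monoid" where
  "GG = PSL2 \<times>\<times> PSL2"

definition HH :: "(mat2 set \<times> mat2 set) set" where
  "HH = {(x, x) | x. x \<in> carrier PSL2}"

definition sharply_transitive_section ::
  "('a, 'b) monoid_scheme \<Rightarrow> 'a set \<Rightarrow> ('a set \<Rightarrow> 'a) \<Rightarrow> bool" where
  "sharply_transitive_section G H \<sigma> \<longleftrightarrow>
     (\<forall>C \<in> lcosets\<^bsub>G\<^esub> H. \<sigma> C \<in> C) \<and>
     \<sigma> H = \<one>\<^bsub>G\<^esub> \<and>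
     (\<forall>C \<in> lcosets\<^bsub>G\<^esub> H. \<forall>D \<in> lcosets\<^bsub>G\<^esub> H.
        \<exists>!z. z \<in> \<sigma> ` (lcosets\<^bsub>G\<^esub> H) \<and> z <#\<^bsub>G\<^esub> C = D)"

definition exp_m :: "real \<Rightarrow> (mat2 set \<times> mat2 set) set" where
  "exp_m lam = {(pexp X, pexp (lam *\<^sub>R X)) | X. X \<in> sl2}"

end

theory Submission
  imports Defs
begin

definition M2 :: "real \<Rightarrow> real \<Rightarrow> real \<Rightarrow> real \<Rightarrow> mat2" where
  "M2 a b c d = (\<chi> i j. if i = 1 then (if j = 1 then a else b) else (if j = 1 then c else d))"

lemma M2_nth: "M2 a b c d $ 1 $ 1 = a" "M2 a b c d $ 1 $ 2 = b" "M2 a b c d $ 2 $ 1 = c" "M2 a b c d $ 2 $ 2 = d"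
  by (simp_all add: M2_def)

lemma M2_eq: "M2 a b c d = M2 a' b' c' d' \<longleftrightarrow> a = a' \<and> b = b' \<and> c = c' \<and> d = d'"
  by (auto simp: vec_eq_iff forall_2 M2_def)

lemma M2_mult: "M2 a b c d ** M2 e f g h = M2 (a*e+b*g) (a*f+b*h) (c*e+d*g) (c*f+d*h)"
  by (simp add: vec_eq_iff forall_2 M2_def matrix_matrix_mult_def sum_2)

lemma M2_one: "mat 1 = M2 1 0 0 1"
  by (simp add: vec_eq_iff forall_2 M2_def mat_def)

lemma M2_neg: "- M2 a b c d = M2 (-a) (-b) (-c) (-d)"
  by (simp add: vec_eq_iff forall_2 M2_def)

lemma M2_add: "M2 a b c d + M2 e f g h = M2 (a+e) (b+f) (c+g) (d+h)"
  by (simp add: vec_eq_iff forall_2 M2_def)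

lemma M2_scale: "r *\<^sub>R M2 a b c d = M2 (r*a) (r*b) (r*c) (r*d)"
  by (simp add: vec_eq_iff forall_2 M2_def)

lemma M2_zero: "0 = M2 0 0 0 0"
  by (simp add: vec_eq_iff forall_2 M2_def)

lemma M2_det: "det (M2 a b c d) = a*d - b*c"
  by (simp add: det_2 M2_def)

lemma M2_trace: "trace (M2 a b c d) = a + d"
  by (simp add: trace_def sum_2 M2_def)

lemma neg_mult: "(- A) ** (B::mat2) = - (A ** B)" "A ** (- B) = - (A ** (B::mat2))"
  by (simp_all add: vec_eq_iff matrix_matrix_mult_def sum_negf)

lemma mexp_nil: assumes "X ** X = 0" shows "mexp X = mat 1 + X"
proof -
  have z: "mpow X (Suc (Suc n)) = 0" for n
    using assms by (simp add: matrix_mul_assoc)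
  have "(\<lambda>n. (1 / fact n) *\<^sub>R mpow X n) sums (\<Sum>n\<in>{0,1}. (1 / fact n) *\<^sub>R mpow X n)"
    apply (rule sums_finite)
     apply simp
    subgoal for n by (cases n; cases "n - 1") (auto simp del: mpow.simps simp: z)
    done
  then show ?thesis unfolding mexp_def by (simp add: sums_iff matrix_mul_rid)
qed

lemma psl_neg: "psl_class (- A) = psl_class A"
  by (auto simp: psl_class_def)

lemma psl_mult: "mult PSL2 (psl_class A) (psl_class B) = psl_class (A ** B)"
  unfolding PSL2_def psl_class_def by (auto simp: neg_mult) (metis neg_mult(1))

definition SS :: "mat2 \<Rightarrow> mat2 \<Rightarrow> (mat2 set \<times> mat2 set) set" where
  "SS A B = {(psl_class (A ** M), psl_class (B ** M)) | M. M \<in> SL2}"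

lemma carrier_GG: "carrier GG = carrier PSL2 \<times> carrier PSL2"
  by (simp add: GG_def DirProd_def)

lemma mult_GG: "mult GG (a, b) (c, d) = (mult PSL2 a c, mult PSL2 b d)"
  by (simp add: GG_def DirProd_def)

lemma coset_S: "(psl_class A, psl_class B) <#\<^bsub>GG\<^esub> HH = SS A B"
  unfolding l_coset_def HH_def SS_def
  by (auto simp: mult_GG PSL2_def psl_mult[unfolded PSL2_def, simplified])

lemma lcos_S: "(psl_class X, psl_class Y) <#\<^bsub>GG\<^esub> SS A B = SS (X ** A) (Y ** B)"
  unfolding l_coset_def SS_def
  by (auto simp: mult_GG psl_mult matrix_mul_assoc)

lemma S_eq:
  assumes "Q \<in> SL2" "Q' \<in> SL2" "Q ** Q' = mat 1"
    and A: "A2 = A1 ** Q \<or> A2 = - (A1 ** Q)" and B: "B2 = B1 ** Q"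
  shows "SS A1 B1 = SS A2 B2"
proof
  show "SS A1 B1 \<subseteq> SS A2 B2"
  proof
    fix x assume "x \<in> SS A1 B1"
    then obtain M where M: "M \<in> SL2" "x = (psl_class (A1 ** M), psl_class (B1 ** M))"
      unfolding SS_def by blast
    have N: "Q' ** M \<in> SL2" using M assms by (simp add: SL2_def det_mul)
    have "A2 ** (Q' ** M) = A1 ** M \<or> A2 ** (Q' ** M) = - (A1 ** M)"
    proof -
      have e: "A1 ** Q ** (Q' ** M) = A1 ** M"
        by (metis assms(3) matrix_mul_assoc matrix_mul_lid)
      show ?thesis using A e by (auto simp: neg_mult)
    qed
    hence "psl_class (A2 ** (Q' ** M)) = psl_class (A1 ** M)" using psl_neg by metis
    moreover have "B2 ** (Q' ** M) = B1 ** M"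
      using B assms(3) by (metis matrix_mul_assoc matrix_mul_rid)
    ultimately show "x \<in> SS A2 B2" unfolding SS_def using M N by force
  qed
  show "SS A2 B2 \<subseteq> SS A1 B1"
  proof
    fix x assume "x \<in> SS A2 B2"
    then obtain M where M: "M \<in> SL2" "x = (psl_class (A2 ** M), psl_class (B2 ** M))"
      unfolding SS_def by blast
    have N: "Q ** M \<in> SL2" using M assms by (simp add: SL2_def det_mul)
    have "A2 ** M = A1 ** (Q ** M) \<or> A2 ** M = - (A1 ** (Q ** M))"
      using A by (auto simp: matrix_mul_assoc neg_mult)
    hence "psl_class (A2 ** M) = psl_class (A1 ** (Q ** M))" using psl_neg by metis
    moreover have "B2 ** M = B1 ** (Q ** M)"
      using B by (simp add: matrix_mul_assoc)
    ultimately show "x \<in> SS A1 B1" unfolding SS_def using M N by force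
  qed
qed

lemma coset_in: "A \<in> SL2 \<Longrightarrow> B \<in> SL2 \<Longrightarrow> SS A B \<in> lcosets\<^bsub>GG\<^esub> HH"
  unfolding LCOSETS_def coset_S[symmetric] carrier_GG by (auto simp: PSL2_def)

lemma exp_nil_in:
  assumes "X ** X = 0" "trace X = 0"
  shows "(psl_class (mat 1 + X), psl_class (mat 1 + lam *\<^sub>R X)) \<in> exp_m lam"
proof -
  have "(lam *\<^sub>R X) ** (lam *\<^sub>R X) = 0" using assms(1)
    by (metis matrix_scalar_ac scalar_matrix_assoc scaleR_zero_right)
  hence "(pexp X, pexp (lam *\<^sub>R X)) = (psl_class (mat 1 + X), psl_class (mat 1 + lam *\<^sub>R X))"
    using assms by (simp add: pexp_def mexp_nil)
  moreover have "X \<in> sl2" using assms by (simp add: sl2_def)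
  ultimately show ?thesis unfolding exp_m_def by blast
qed

lemma M2_SL2: "a*d - b*c = 1 \<Longrightarrow> M2 a b c d \<in> SL2"
  by (simp add: SL2_def M2_det)

lemma psl_neq: "M2 a b c d \<noteq> M2 a' b' c' d' \<Longrightarrow> M2 a b c d \<noteq> M2 (-a') (-b') (-c') (-d') \<Longrightarrow>
   psl_class (M2 a b c d) \<noteq> psl_class (M2 a' b' c' d')"
  by (auto simp: psl_class_def M2_neg)

theorem proposition8:
  fixes lam :: real
  assumes "lam \<noteq> 0" and "lam \<noteq> 1"
  shows "\<not> (\<exists>\<sigma>. sharply_transitive_section GG HH \<sigma> \<and>
               \<sigma> ` (lcosets\<^bsub>GG\<^esub> HH) = exp_m lam)"
proof
  assume "\<exists>\<sigma>. sharply_transitive_section GG HH \<sigma> \<and> \<sigma> ` (lcosets\<^bsub>GG\<^esub> HH) = exp_m lam"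
  then obtain \<sigma> where st: "sharply_transitive_section GG HH \<sigma>"
    and im: "\<sigma> ` (lcosets\<^bsub>GG\<^esub> HH) = exp_m lam" by blast
  have key: "z1 = z2" if "C \<in> lcosets\<^bsub>GG\<^esub> HH" "D \<in> lcosets\<^bsub>GG\<^esub> HH"
     "z1 \<in> exp_m lam" "z2 \<in> exp_m lam" "z1 <#\<^bsub>GG\<^esub> C = D" "z2 <#\<^bsub>GG\<^esub> C = D" for z1 z2 C D
    using st that im unfolding sharply_transitive_section_def by metis
  have nil: "M2 0 b 0 0 ** M2 0 b 0 0 = 0" "M2 0 0 c 0 ** M2 0 0 c 0 = 0" for b c
    by (simp_all add: M2_mult M2_zero)
  show False
  proof (cases "lam > 0")
    case True
    define r where "r = sqrt lam"
    have r: "r > 0" "r * r = lam" using True by (auto simp: r_def)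
    define g where "g = M2 (1/r) 0 0 r"
    have gS: "g \<in> SL2" unfolding g_def using r by (intro M2_SL2) simp
    have oS: "mat 1 \<in> SL2" by (simp add: SL2_def)
    let ?C = "SS g (mat 1)"
    have z1: "(psl_class (M2 1 0 0 1), psl_class (M2 1 0 0 1)) \<in> exp_m lam"
      using exp_nil_in[of "M2 0 0 0 0" lam] by (simp add: M2_mult M2_zero[symmetric] M2_one trace_def)
    have z2: "(psl_class (M2 1 1 0 1), psl_class (M2 1 lam 0 1)) \<in> exp_m lam"
      using exp_nil_in[of "M2 0 1 0 0" lam] nil by (simp add: M2_trace M2_one M2_add M2_scale)
    have e1: "(psl_class (M2 1 0 0 1), psl_class (M2 1 0 0 1)) <#\<^bsub>GG\<^esub> ?C = ?C"
      by (simp add: lcos_S M2_one[symmetric])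
    have e2: "(psl_class (M2 1 1 0 1), psl_class (M2 1 lam 0 1)) <#\<^bsub>GG\<^esub> ?C = ?C"
      unfolding lcos_S
    proof (rule S_eq[symmetric])
      show "M2 1 lam 0 1 \<in> SL2" "M2 1 (-lam) 0 1 \<in> SL2" by (auto intro: M2_SL2)
      show "M2 1 lam 0 1 ** M2 1 (- lam) 0 1 = mat 1" by (simp add: M2_mult M2_one)
      show "M2 1 1 0 1 ** g = g ** M2 1 lam 0 1 \<or> M2 1 1 0 1 ** g = - (g ** M2 1 lam 0 1)"
        using r unfolding g_def by (simp add: M2_mult M2_eq field_simps)
      show "M2 1 lam 0 1 ** mat 1 = mat 1 ** M2 1 lam 0 1" by simp
    qed
    have "(psl_class (M2 1 0 0 1), psl_class (M2 1 0 0 1)) = (psl_class (M2 1 1 0 1), psl_class (M2 1 lam 0 1))"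
      using key[OF coset_in[OF gS oS] coset_in[OF gS oS] z1 z2 e1 e2] .
    moreover have "psl_class (M2 1 0 0 1) \<noteq> psl_class (M2 1 1 0 1)"
      by (rule psl_neq) (simp_all add: M2_eq)
    ultimately show False by simp
  next
    case False
    hence neg: "lam < 0" using assms(1) by simp
    define r where "r = sqrt (- lam)"
    have r: "r > 0" "lam = - (r * r)" using neg by (auto simp: r_def)
    define t where "t = 4 / (1 + lam^2)"
    define g where "g = M2 (-r) ((1 + lam^2) / (2*r)) 0 (-1/r)"
    have gS: "g \<in> SL2" unfolding g_def using r by (intro M2_SL2) simp
    have oS: "mat 1 \<in> SL2" by (simp add: SL2_def)
    let ?C = "SS g (mat 1)"
    let ?D = "SS (M2 1 1 0 1 ** g) (M2 1 lam 0 1)"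
    have z1: "(psl_class (M2 1 1 0 1), psl_class (M2 1 lam 0 1)) \<in> exp_m lam"
      using exp_nil_in[of "M2 0 1 0 0" lam] nil by (simp add: M2_trace M2_one M2_add M2_scale)
    have z2: "(psl_class (M2 1 0 t 1), psl_class (M2 1 0 (lam*t) 1)) \<in> exp_m lam"
      using exp_nil_in[of "M2 0 0 t 0" lam] nil by (simp add: M2_trace M2_one M2_add M2_scale)
    have DS: "M2 1 1 0 1 ** g \<in> SL2" "M2 1 lam 0 1 \<in> SL2"
      using gS by (auto simp: SL2_def det_mul M2_det)
    have e1: "(psl_class (M2 1 1 0 1), psl_class (M2 1 lam 0 1)) <#\<^bsub>GG\<^esub> ?C = ?D"
      by (simp add: lcos_S)
    have e2: "(psl_class (M2 1 0 t 1), psl_class (M2 1 0 (lam*t) 1)) <#\<^bsub>GG\<^esub> ?C = ?D"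
      unfolding lcos_S
    proof (rule S_eq[symmetric])
      show "M2 (1 - lam^2*t) (-lam) (lam*t) 1 \<in> SL2" "M2 1 lam (-lam*t) (1 - lam^2*t) \<in> SL2"
        by (auto intro!: M2_SL2 simp: algebra_simps power2_eq_square)
      show "M2 (1 - lam^2*t) (-lam) (lam*t) 1 ** M2 1 lam (-lam*t) (1 - lam^2*t) = mat 1"
        by (simp add: M2_mult M2_one M2_eq algebra_simps power2_eq_square)
      show "M2 1 0 t 1 ** g = M2 1 1 0 1 ** g ** M2 (1 - lam^2*t) (-lam) (lam*t) 1 \<or>
            M2 1 0 t 1 ** g = - (M2 1 1 0 1 ** g ** M2 (1 - lam^2*t) (-lam) (lam*t) 1)"
      proof (rule disjI2)
        have p: "1 + r*(r*(r*r)) > 0" "r * (r * 2) + r * (r * (r * (r * (r * (r * 2))))) > 0"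
          "r * 2 + r * (r * (r * (r * (r * 2)))) > 0"
          "r * (r * 2) + (r * (r * (r * (r * (r * (r * 4))))) + r * (r * (r * (r * (r * (r * (r * (r * (r * (r * 2)))))))))) > 0"
          using r(1) by (simp_all add: add_pos_pos)
        show "M2 1 0 t 1 ** g = - (M2 1 1 0 1 ** g ** M2 (1 - lam^2*t) (-lam) (lam*t) 1)"
          using r p unfolding g_def t_def
          by (simp add: M2_mult M2_eq M2_neg power2_eq_square) (simp add: field_simps)
      qed
      show "M2 1 0 (lam*t) 1 ** mat 1 = M2 1 lam 0 1 ** M2 (1 - lam^2*t) (-lam) (lam*t) 1"
        by (simp add: M2_mult M2_one M2_eq algebra_simps power2_eq_square)
    qed
    have "(psl_class (M2 1 1 0 1), psl_class (M2 1 lam 0 1)) = (psl_class (M2 1 0 t 1), psl_class (M2 1 0 (lam*t) 1))"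
      using key[OF coset_in[OF gS oS] coset_in[OF DS] z1 z2 e1 e2] .
    moreover have "psl_class (M2 1 1 0 1) \<noteq> psl_class (M2 1 0 t 1)"
      by (rule psl_neq) (simp_all add: M2_eq)
    ultimately show False by simp
  qed
qed

end
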